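(* Let $Q(y)$ and $R(y)$ be probability distributions on the set of one-hot vectors $\{0,1\}^k\cap\Delta^{k-1}$. Let $\mathcal{P}_c[Q]$ denote the set of probability distributions $P(c)$ on $\Delta^{k-1}$ such that, for $c\sim P$, the one-hot vector $e_{\arg\max_j c_j}$ has distribution $Q$. Then $$\inf_{P(c)\in\mathcal{P}_c[Q]}W_\infty\bigl(P(c),R(y)\bigr)=0.5\,W_\infty\bigl(Q(y),R(y)\bigr).$$
   Context: $\Delta^{k-1}=\{c\in\mathbb{R}^k: c_j\ge 0,\ \sum_j c_j=1\}$; $e_i$ is the $i$-th standard basis vector. For probability distributions $P,Q$ on $\mathbb{R}^k$, $W_\infty(P,Q)=\inf_{\pi\in\Pi(P,Q)}\int\|u-v\|_\infty\,d\pi(u,v)$ over couplings $\pi$ of $P$ and $Q$ (optimal transport distance with ground cost $\|u-v\|_\infty$). Ties in $\arg\max$ are broken by a fixed rule (e.g. smallest index). (In the paper, $Q$ is the pseudo-label distribution $P_{\mathrm{pseudo}}(y)$ and $R$ is the target label distribution $P_T(y)$.) *)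

theory Defs
  imports "HOL-Probability.Probability"
begin

text \<open>Vectors in R^k are rendered as real^'k with a finite, well-ordered index type 'k
  (the well-order provides the fixed tie-breaking rule: smallest index).\<close>

definition prob_simplex :: "(real ^ 'k::finite) set" where
  "prob_simplex = {c. (\<forall>i. 0 \<le> c $ i) \<and> (\<Sum>i\<in>UNIV. c $ i) = 1}"

definition onehots :: "(real ^ 'k::finite) set" where
  "onehots = {axis i 1 | i. True}"

definition argmax_idx :: "real ^ 'k::{finite,wellorder} \<Rightarrow> 'k" where
  "argmax_idx c = (LEAST i. \<forall>j. c $ j \<le> c $ i)"

definition onehot_of :: "real ^ 'k::{finite,wellorder} \<Rightarrow> real ^ 'k::{finite,wellorder}" where
  "onehot_of c = axis (argmax_idx c) 1"

definition distr_on :: "(real ^ 'k::finite) set \<Rightarrow> (real ^ 'k) measure \<Rightarrow> bool" where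
  "distr_on S P \<longleftrightarrow> prob_space P \<and> sets P = sets borel \<and> S \<in> sets borel \<and> emeasure P S = 1"

definition couplings :: "(real ^ 'k::finite) measure \<Rightarrow> (real ^ 'k) measure
    \<Rightarrow> ((real ^ 'k) \<times> (real ^ 'k)) measure set" where
  "couplings P Q = {\<pi>. prob_space \<pi> \<and> sets \<pi> = sets (borel \<Otimes>\<^sub>M borel)
      \<and> distr \<pi> borel fst = P \<and> distr \<pi> borel snd = Q}"

definition W_inf :: "(real ^ 'k::finite) measure \<Rightarrow> (real ^ 'k) measure \<Rightarrow> real" where
  "W_inf P Q = Inf {(\<integral>uv. infnorm (fst uv - snd uv) \<partial>\<pi>) | \<pi>. \<pi> \<in> couplings P Q}"

definition Pc :: "(real ^ 'k::{finite,wellorder}) measure \<Rightarrow> (real ^ 'k::{finite,wellorder}) measure set" where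
  "Pc Q = {P. distr_on prob_simplex P \<and> distr P borel onehot_of = Q}"

end

theory Submission
  imports Defs
begin

lemma argmax_max: "\<forall>j. c $ j \<le> c $ argmax_idx (c::real^'k::{finite,wellorder})"
proof -
  define m where "m = Max (range (\<lambda>j. c $ j))"
  have "m \<in> range (\<lambda>j. c $ j)" unfolding m_def by (intro Max_in) auto
  then obtain i where i: "c $ i = m" by auto
  have "\<forall>j. c $ j \<le> c $ i" using i unfolding m_def by (auto intro: Max_ge)
  then show ?thesis unfolding argmax_idx_def by (rule LeastI)
qed

lemma argmax_eq:
  assumes "\<And>j. j \<noteq> i \<Longrightarrow> c $ j < c $ i"
  shows "argmax_idx (c::real^'k::{finite,wellorder}) = i"
  unfolding argmax_idx_def
proof (rule Least_equality)
  show "\<forall>j. c $ j \<le> c $ i" using assms by (metis less_imp_le order_refl)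
  fix m assume "\<forall>j. c $ j \<le> c $ m"
  then show "i \<le> m" using assms by (metis not_le order_refl le_less_linear leD)
qed

lemma argmax_set:
  "{c::real^'k::{finite,wellorder}. argmax_idx c = i} = {c. (\<forall>j. c$j \<le> c$i) \<and> (\<forall>j<i. c$j < c$i)}"
proof (intro set_eqI iffI)
  fix c :: "real^'k::{finite,wellorder}" assume "c \<in> {c. argmax_idx c = i}"
  then have e: "argmax_idx c = i" by simp
  have "\<forall>j. c$j \<le> c$i" using argmax_max[of c] e by simp
  moreover have "\<forall>j<i. c$j < c$i"
  proof (intro allI impI)
    fix j assume "j < i"
    show "c$j < c$i"
    proof (rule ccontr)
      assume "\<not> c$j < c$i"
      then have "\<forall>l. c$l \<le> c$j" using \<open>\<forall>j. c$j \<le> c$i\<close> by (meson not_less order_trans)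
      then have "argmax_idx c \<le> j" unfolding argmax_idx_def by (rule Least_le)
      then show False using e \<open>j < i\<close> by simp
    qed
  qed
  ultimately show "c \<in> {c. (\<forall>j. c$j \<le> c$i) \<and> (\<forall>j<i. c$j < c$i)}" by simp
next
  fix c :: "real^'k::{finite,wellorder}" assume "c \<in> {c. (\<forall>j. c$j \<le> c$i) \<and> (\<forall>j<i. c$j < c$i)}"
  then have h: "\<forall>j. c$j \<le> c$i" "\<forall>j<i. c$j < c$i" by auto
  have "argmax_idx c = i" unfolding argmax_idx_def
  proof (rule Least_equality)
    show "\<forall>j. c $ j \<le> c $ i" using h by simp
    fix m assume "\<forall>j. c $ m \<ge> c $ j"
    then show "i \<le> m" using h by (meson not_le)
  qed
  then show "c \<in> {c. argmax_idx c = i}" by simp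
qed

lemma argmax_meas: "argmax_idx \<in> measurable (borel :: (real^'k::{finite,wellorder}) measure) (count_space UNIV)"
proof (subst measurable_count_space_eq2)
  show "finite (UNIV::'k set)" by simp
  show "argmax_idx \<in> space borel \<rightarrow> UNIV \<and> (\<forall>a\<in>UNIV. argmax_idx -` {a} \<inter> space borel \<in> sets (borel :: (real^'k::{finite,wellorder}) measure))"
  proof (intro conjI ballI)
    fix a :: 'k
    have "argmax_idx -` {a} \<inter> space borel = {c::real^'k::{finite,wellorder}. (\<forall>j. c$j \<le> c$a)} \<inter> {c. (\<forall>j<a. c$j < c$a)}"
      using argmax_set[of a] by auto
    also have "\<dots> \<in> sets borel"
    proof (rule sets.Int)
      show "{c::real^'k::{finite,wellorder}. (\<forall>j. c$j \<le> c$a)} \<in> sets borel"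
        by (intro borel_closed closed_Collect_all closed_Collect_le continuous_intros)
      have "{c::real^'k::{finite,wellorder}. (\<forall>j<a. c$j < c$a)} = (\<Inter>j\<in>{..<a}. {c. c$j < c$a})" by auto
      also have "\<dots> \<in> sets borel"
        by (intro borel_open open_INT) (auto intro!: open_Collect_less continuous_intros)
      finally show "{c::real^'k::{finite,wellorder}. (\<forall>j<a. c$j < c$a)} \<in> sets borel" .
    qed
    finally show "argmax_idx -` {a} \<inter> space borel \<in> sets (borel :: (real^'k::{finite,wellorder}) measure)" .
  qed simp
qed

lemma onehot_meas: "onehot_of \<in> borel_measurable (borel :: (real^'k::{finite,wellorder}) measure)"
proof -
  have "(\<lambda>i::'k. axis i (1::real)) \<in> measurable (count_space UNIV) borel" by simp
  from measurable_comp[OF argmax_meas this] show ?thesis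
    unfolding onehot_of_def[abs_def] by (simp add: o_def)
qed

lemma infnorm_meas: "(\<lambda>uv::(real^'k::finite)\<times>(real^'k). infnorm (fst uv - snd uv)) \<in> borel_measurable (borel \<Otimes>\<^sub>M borel)"
proof -
  have "(\<lambda>uv::(real^'k)\<times>(real^'k). infnorm (fst uv - snd uv)) \<in> borel_measurable borel"
    by (intro borel_measurable_continuous_onI continuous_intros)
  then show ?thesis by (simp add: borel_prod)
qed


lemma infnorm_bound: "(\<And>m. \<bar>x $ m\<bar> \<le> B) \<Longrightarrow> infnorm (x::real^'n) \<le> B"
  unfolding infnorm_cart by (rule cSup_least) auto

lemma onehots_iff: "y \<in> onehots \<longleftrightarrow> (\<exists>i. y = axis i (1::real))"
  unfolding onehots_def by auto

lemma simplex_le1: "c \<in> prob_simplex \<Longrightarrow> c $ m \<le> (1::real)"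
proof -
  assume c: "c \<in> prob_simplex"
  have "c $ m \<le> (\<Sum>i\<in>UNIV. c $ i)"
    using c unfolding prob_simplex_def by (intro member_le_sum) auto
  then show ?thesis using c unfolding prob_simplex_def by simp
qed

lemma infnorm_le1: "c \<in> prob_simplex \<Longrightarrow> y \<in> onehots \<Longrightarrow> infnorm (c - y) \<le> 1"
proof (rule infnorm_bound)
  fix m assume c: "c \<in> prob_simplex" and y: "y \<in> onehots"
  have "0 \<le> c $ m" "c $ m \<le> 1" using c simplex_le1[OF c] unfolding prob_simplex_def by auto
  moreover have "y $ m = 0 \<or> y $ m = 1" using y unfolding onehots_iff by (auto simp: axis_def)
  ultimately show "\<bar>(c - y) $ m\<bar> \<le> 1" by auto
qed

lemma onehot_diff_le1: "infnorm (axis i (1::real) - axis j 1 :: real^'n) \<le> 1"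
  by (rule infnorm_bound) (auto simp: axis_def)

lemma lb_point:
  fixes c :: "real^'k::{finite,wellorder}"
  assumes c: "c \<in> prob_simplex" and y: "y \<in> onehots"
  shows "infnorm (onehot_of c - y) \<le> 2 * infnorm (c - y)"
proof -
  obtain j where yj: "y = axis j 1" using y unfolding onehots_iff by auto
  define i where "i = argmax_idx c"
  show ?thesis
  proof (cases "i = j")
    case True
    then show ?thesis using yj by (simp add: onehot_of_def i_def[symmetric] infnorm_pos_le infnorm_0)
  next
    case False
    have nn: "\<forall>m. 0 \<le> c $ m" and s1: "(\<Sum>m\<in>UNIV. c $ m) = 1" using c unfolding prob_simplex_def by auto
    have "(\<Sum>m\<in>{i,j}. c $ m) \<le> (\<Sum>m\<in>UNIV. c $ m)"
      using nn by (intro sum_mono2) auto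
    then have "c $ i + c $ j \<le> 1" using False s1 by simp
    moreover have "c $ j \<le> c $ i" using argmax_max[of c] i_def by simp
    ultimately have cj: "c $ j \<le> 1/2" by simp
    have "\<bar>(c - y) $ j\<bar> \<le> infnorm (c - y)" by (rule component_le_infnorm_cart)
    moreover have "(c - y) $ j = c $ j - 1" using yj by (simp add: axis_def)
    ultimately have "1/2 \<le> infnorm (c - y)" using cj by simp
    moreover have "infnorm (onehot_of c - y) \<le> 1"
      using yj onehot_diff_le1 by (simp add: onehot_of_def)
    ultimately show ?thesis by simp
  qed
qed

lemma ub_onehot:
  fixes x y :: "real^'k::{finite,wellorder}"
  assumes x: "x \<in> onehots" and y: "y \<in> onehots" and e: "0 < e" "e < 1/2"
  shows "onehot_of ((1/2+e) *\<^sub>R x + (1/2-e) *\<^sub>R y) = x"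
proof -
  obtain i where xi: "x = axis i 1" using x unfolding onehots_iff by auto
  obtain j where yj: "y = axis j 1" using y unfolding onehots_iff by auto
  have "argmax_idx ((1/2+e) *\<^sub>R x + (1/2-e) *\<^sub>R y) = i"
    by (rule argmax_eq) (use e in \<open>auto simp: xi yj axis_def\<close>)
  then show ?thesis by (simp add: onehot_of_def xi)
qed

lemma ub_simplex:
  fixes x y :: "real^'k::finite"
  assumes x: "x \<in> onehots" and y: "y \<in> onehots" and e: "0 < e" "e < 1/2"
  shows "(1/2+e) *\<^sub>R x + (1/2-e) *\<^sub>R y \<in> prob_simplex"
proof -
  obtain i where xi: "x = axis i 1" using x unfolding onehots_iff by auto
  obtain j where yj: "y = axis j 1" using y unfolding onehots_iff by auto
  have "(\<Sum>m\<in>UNIV. ((1/2+e) *\<^sub>R x + (1/2-e) *\<^sub>R y) $ m) = (1/2+e) * (\<Sum>m\<in>UNIV. x $ m) + (1/2-e) * (\<Sum>m\<in>UNIV. y $ m)"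
    by (simp add: sum.distrib sum_distrib_left)
  also have "\<dots> = 1" by (simp add: xi yj axis_def)
  finally show ?thesis using e unfolding prob_simplex_def by (auto simp: xi yj axis_def)
qed

lemma ub_dist:
  fixes x y :: "real^'k::finite"
  assumes e: "0 < e" "e < 1/2"
  shows "infnorm ((1/2+e) *\<^sub>R x + (1/2-e) *\<^sub>R y - y) = (1/2+e) * infnorm (x - y)"
proof -
  have "(1/2+e) *\<^sub>R x + (1/2-e) *\<^sub>R y - y = (1/2+e) *\<^sub>R (x - y)"
    by (simp add: scaleR_diff_right scaleR_diff_left scaleR_add_left)
  then show ?thesis using e by (simp add: infnorm_mul)
qed

lemma simplex_borel: "prob_simplex \<in> sets (borel :: (real^'k::finite) measure)"
proof -
  have "prob_simplex = {c::real^'k. \<forall>i. 0 \<le> c $ i} \<inter> {c. (\<Sum>i\<in>UNIV. c $ i) = 1}"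
    unfolding prob_simplex_def by auto
  also have "\<dots> \<in> sets borel"
    by (intro borel_closed closed_Int closed_Collect_all closed_Collect_le closed_Collect_eq continuous_intros)
  finally show ?thesis .
qed

lemma onehots_borel: "onehots \<in> sets (borel :: (real^'k::finite) measure)"
proof -
  have "onehots = range (\<lambda>i::'k. axis i (1::real))" unfolding onehots_def by auto
  then have "finite (onehots :: (real^'k) set)" by (metis finite finite_imageI)
  then show ?thesis by (intro borel_closed finite_imp_closed)
qed


lemma coupling_meas_fst: "\<pi> \<in> couplings P R \<Longrightarrow> fst \<in> measurable \<pi> borel"
proof -
  assume "\<pi> \<in> couplings P R"
  then have se: "sets \<pi> = sets (borel \<Otimes>\<^sub>M borel)" unfolding couplings_def by auto
  show ?thesis using measurable_fst[of borel borel] by (simp add: measurable_cong_sets[OF se refl])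
qed

lemma coupling_meas_snd: "\<pi> \<in> couplings P R \<Longrightarrow> snd \<in> measurable \<pi> borel"
proof -
  assume "\<pi> \<in> couplings P R"
  then have se: "sets \<pi> = sets (borel \<Otimes>\<^sub>M borel)" unfolding couplings_def by auto
  show ?thesis using measurable_snd[of borel borel] by (simp add: measurable_cong_sets[OF se refl])
qed

lemma AE_coupling_fst:
  assumes pi: "\<pi> \<in> couplings P R" and P: "distr_on S P"
  shows "AE z in \<pi>. fst z \<in> S"
proof -
  have "AE x in P. x \<in> S" using P unfolding distr_on_def
    by (subst prob_space.AE_in_set_eq_1) (auto simp: measure_def)
  moreover have eq: "distr \<pi> borel fst = P" using pi unfolding couplings_def by auto
  ultimately have "AE x in distr \<pi> borel fst. x \<in> S" by (simp only: eq)
  then show ?thesis by (rule AE_distrD[OF coupling_meas_fst[OF pi]])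
qed

lemma AE_coupling_snd:
  assumes pi: "\<pi> \<in> couplings P R" and R: "distr_on S R"
  shows "AE z in \<pi>. snd z \<in> S"
proof -
  have "AE x in R. x \<in> S" using R unfolding distr_on_def
    by (subst prob_space.AE_in_set_eq_1) (auto simp: measure_def)
  moreover have eq: "distr \<pi> borel snd = R" using pi unfolding couplings_def by auto
  ultimately have "AE x in distr \<pi> borel snd. x \<in> S" by (simp only: eq)
  then show ?thesis by (rule AE_distrD[OF coupling_meas_snd[OF pi]])
qed

lemma coupling_map:
  assumes pi: "\<pi> \<in> couplings P R" and g: "g \<in> borel_measurable (borel \<Otimes>\<^sub>M borel)"
  shows "distr \<pi> (borel \<Otimes>\<^sub>M borel) (\<lambda>z. (g z, snd z)) \<in> couplings (distr \<pi> borel g) R"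
    and "(\<lambda>z. (g z, snd z)) \<in> measurable \<pi> (borel \<Otimes>\<^sub>M borel)"
proof -
  have ps: "prob_space \<pi>" and se: "sets \<pi> = sets (borel \<Otimes>\<^sub>M borel)" and m2: "distr \<pi> borel snd = R"
    using pi unfolding couplings_def by auto
  have gm: "g \<in> borel_measurable \<pi>" using g se by (simp add: measurable_cong_sets[OF se refl])
  show hm: "(\<lambda>z. (g z, snd z)) \<in> measurable \<pi> (borel \<Otimes>\<^sub>M borel)"
    by (intro measurable_Pair gm coupling_meas_snd[OF pi])
  show "distr \<pi> (borel \<Otimes>\<^sub>M borel) (\<lambda>z. (g z, snd z)) \<in> couplings (distr \<pi> borel g) R"
    unfolding couplings_def
  proof (intro CollectI conjI)
    show "prob_space (distr \<pi> (borel \<Otimes>\<^sub>M borel) (\<lambda>z. (g z, snd z)))"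
      by (rule prob_space.prob_space_distr[OF ps hm])
    show "sets (distr \<pi> (borel \<Otimes>\<^sub>M borel) (\<lambda>z. (g z, snd z))) = sets (borel \<Otimes>\<^sub>M borel)" by simp
    show "distr (distr \<pi> (borel \<Otimes>\<^sub>M borel) (\<lambda>z. (g z, snd z))) borel fst = distr \<pi> borel g"
      by (subst distr_distr[OF measurable_fst hm]) (simp add: o_def)
    show "distr (distr \<pi> (borel \<Otimes>\<^sub>M borel) (\<lambda>z. (g z, snd z))) borel snd = R"
      by (subst distr_distr[OF measurable_snd hm]) (simp add: o_def m2)
  qed
qed

lemma coupling_prod:
  assumes P: "distr_on S P" and R: "distr_on T R"
  shows "P \<Otimes>\<^sub>M R \<in> couplings P R"
proof -
  have pP: "prob_space P" and sP: "sets P = sets borel" and pR: "prob_space R" and sR: "sets R = sets borel"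
    using P R unfolding distr_on_def by auto
  interpret pp: pair_prob_space P R using pP pR by (simp add: pair_prob_space_def pair_sigma_finite_def prob_space_imp_sigma_finite)
  have spP: "space P = UNIV" using sets_eq_imp_space_eq[OF sP] by simp
  have spR: "space R = UNIV" using sets_eq_imp_space_eq[OF sR] by simp
  show ?thesis unfolding couplings_def
  proof (intro CollectI conjI)
    show "prob_space (P \<Otimes>\<^sub>M R)" by (rule pp.P.prob_space_axioms)
    show "sets (P \<Otimes>\<^sub>M R) = sets (borel \<Otimes>\<^sub>M borel)" by (rule sets_pair_measure_cong[OF sP sR])
    show "distr (P \<Otimes>\<^sub>M R) borel fst = P"
    proof (rule measure_eqI)
      show "sets (distr (P \<Otimes>\<^sub>M R) borel fst) = sets P" using sP by simp
      fix A assume "A \<in> sets (distr (P \<Otimes>\<^sub>M R) borel fst)"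
      then have A: "A \<in> sets P" using sP by simp
      have "fst -` A \<inter> space (P \<Otimes>\<^sub>M R) = A \<times> space R" by (auto simp: space_pair_measure spP spR)
      moreover have "emeasure (P \<Otimes>\<^sub>M R) (A \<times> space R) = emeasure P A * emeasure R (space R)"
        by (rule sigma_finite_measure.emeasure_pair_measure_Times[OF prob_space_imp_sigma_finite[OF pR]]) (use A sR in auto)
      ultimately show "emeasure (distr (P \<Otimes>\<^sub>M R) borel fst) A = emeasure P A"
        using A sP by (simp add: emeasure_distr measurable_cong_sets[OF sets_pair_measure_cong[OF sP sR] refl]
            pp.M2.emeasure_space_1)
    qed
    show "distr (P \<Otimes>\<^sub>M R) borel snd = R"
    proof (rule measure_eqI)
      show "sets (distr (P \<Otimes>\<^sub>M R) borel snd) = sets R" using sR by simp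
      fix A assume "A \<in> sets (distr (P \<Otimes>\<^sub>M R) borel snd)"
      then have A: "A \<in> sets R" using sR by simp
      have "snd -` A \<inter> space (P \<Otimes>\<^sub>M R) = space P \<times> A" by (auto simp: space_pair_measure spP spR)
      moreover have "emeasure (P \<Otimes>\<^sub>M R) (space P \<times> A) = emeasure P (space P) * emeasure R A"
        by (rule sigma_finite_measure.emeasure_pair_measure_Times[OF prob_space_imp_sigma_finite[OF pR]]) (use A sR in auto)
      ultimately show "emeasure (distr (P \<Otimes>\<^sub>M R) borel snd) A = emeasure R A"
        using A sR by (simp add: emeasure_distr measurable_cong_sets[OF sets_pair_measure_cong[OF sP sR] refl]
            pp.M1.emeasure_space_1)
    qed
  qed
qed


definition cst :: "((real^'k::finite) \<times> (real^'k)) \<Rightarrow> real" where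
  "cst uv = infnorm (fst uv - snd uv)"

lemma W_inf_alt: "W_inf P R = Inf {(\<integral>uv. cst uv \<partial>\<pi>) | \<pi>. \<pi> \<in> couplings P R}"
  unfolding W_inf_def cst_def by simp

lemma cst_meas: "cst \<in> borel_measurable (borel \<Otimes>\<^sub>M borel)"
  unfolding cst_def[abs_def] by (rule infnorm_meas)

lemma W_nonneg_le:
  assumes "\<pi> \<in> couplings P R"
  shows "W_inf P R \<le> (\<integral>uv. cst uv \<partial>\<pi>)"
  unfolding W_inf_alt
proof (rule cInf_lower)
  show "(\<integral>uv. cst uv \<partial>\<pi>) \<in> {(\<integral>uv. cst uv \<partial>\<pi>) | \<pi>. \<pi> \<in> couplings P R}" using assms by auto
  show "bdd_below {(\<integral>uv. cst uv \<partial>\<pi>) | \<pi>. \<pi> \<in> couplings P R}"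
    by (rule bdd_belowI[of _ 0]) (auto simp: cst_def infnorm_pos_le)
qed

lemma W_ge:
  assumes "couplings P R \<noteq> {}" and "\<And>\<pi>. \<pi> \<in> couplings P R \<Longrightarrow> B \<le> (\<integral>uv. cst uv \<partial>\<pi>)"
  shows "B \<le> W_inf P R"
  unfolding W_inf_alt using assms by (intro cInf_greatest) auto

lemma W_nonneg:
  assumes "couplings P R \<noteq> {}"
  shows "0 \<le> W_inf P R"
  using assms by (intro W_ge) (auto simp: cst_def infnorm_pos_le)

lemma lower:
  fixes Q R P :: "(real ^ 'k::{finite,wellorder}) measure"
  assumes Q: "distr_on onehots Q" and R: "distr_on onehots R" and P: "P \<in> Pc Q"
  shows "W_inf Q R \<le> 2 * W_inf P R"
proof -
  have Pd: "distr_on prob_simplex P" and PQ: "distr P borel onehot_of = Q" using P unfolding Pc_def by auto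
  have ne: "couplings P R \<noteq> {}" using coupling_prod[OF Pd R] by auto
  have "W_inf Q R / 2 \<le> W_inf P R"
  proof (rule W_ge[OF ne])
    fix \<pi> assume pi: "\<pi> \<in> couplings P R"
    have ps: "prob_space \<pi>" and se: "sets \<pi> = sets (borel \<Otimes>\<^sub>M borel)" and m1: "distr \<pi> borel fst = P"
      using pi unfolding couplings_def by auto
    interpret prob_space \<pi> by (rule ps)
    define g where "g = (\<lambda>z::(real^'k::{finite,wellorder})\<times>(real^'k::{finite,wellorder}). onehot_of (fst z))"
    have gm: "g \<in> borel_measurable (borel \<Otimes>\<^sub>M borel)"
      unfolding g_def by (rule measurable_compose[OF measurable_fst onehot_meas])
    note cm = coupling_map[OF pi gm]
    have "distr \<pi> borel g = distr (distr \<pi> borel fst) borel onehot_of"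
      by (subst distr_distr[OF onehot_meas coupling_meas_fst[OF pi]]) (simp add: g_def o_def)
    also have "\<dots> = Q" using m1 PQ by simp
    finally have "distr \<pi> (borel \<Otimes>\<^sub>M borel) (\<lambda>z. (g z, snd z)) \<in> couplings Q R" using cm(1) by simp
    then have "W_inf Q R \<le> (\<integral>uv. cst uv \<partial>distr \<pi> (borel \<Otimes>\<^sub>M borel) (\<lambda>z. (g z, snd z)))"
      by (rule W_nonneg_le)
    also have "\<dots> = (\<integral>z. cst (g z, snd z) \<partial>\<pi>)"
      by (rule integral_distr[OF cm(2) cst_meas])
    also have "\<dots> \<le> (\<integral>z. 2 * cst z \<partial>\<pi>)"
    proof (rule integral_mono_AE)
      have cm\<pi>: "cst \<in> borel_measurable \<pi>" using cst_meas by (simp add: measurable_cong_sets[OF se refl])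
      have AE1: "AE z in \<pi>. fst z \<in> prob_simplex" by (rule AE_coupling_fst[OF pi Pd])
      have AE2: "AE z in \<pi>. snd z \<in> onehots" by (rule AE_coupling_snd[OF pi R])
      show "integrable \<pi> (\<lambda>z. cst (g z, snd z))"
      proof (rule integrable_const_bound[where B=1])
        show "AE z in \<pi>. norm (cst (g z, snd z)) \<le> 1"
          using AE2 by eventually_elim
             (auto simp: cst_def g_def onehot_of_def onehots_iff infnorm_pos_le intro: onehot_diff_le1)
        show "(\<lambda>z. cst (g z, snd z)) \<in> borel_measurable \<pi>"
          by (rule measurable_compose[OF cm(2) cst_meas])
      qed
      show "integrable \<pi> (\<lambda>z. 2 * cst z)"
      proof (rule integrable_const_bound[where B=2])
        show "AE z in \<pi>. norm (2 * cst z) \<le> 2"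
          using AE1 AE2 by eventually_elim (auto simp: cst_def infnorm_pos_le intro: infnorm_le1)
        show "(\<lambda>z. 2 * cst z) \<in> borel_measurable \<pi>" using cm\<pi> by measurable
      qed
      show "AE z in \<pi>. cst (g z, snd z) \<le> 2 * cst z"
        using AE1 AE2 by eventually_elim (auto simp: cst_def g_def intro: lb_point)
    qed
    also have "\<dots> = 2 * (\<integral>z. cst z \<partial>\<pi>)" by simp
    finally show "W_inf Q R / 2 \<le> (\<integral>z. cst z \<partial>\<pi>)" by simp
  qed
  then show ?thesis by simp
qed


lemma upper_P:
  fixes Q R :: "(real ^ 'k::{finite,wellorder}) measure"
  assumes Q: "distr_on onehots Q" and R: "distr_on onehots R" and sig: "\<sigma> \<in> couplings Q R"
    and e: "0 < e" "e < 1/2"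
  defines "g \<equiv> (\<lambda>z::(real^'k::{finite,wellorder})\<times>(real^'k::{finite,wellorder}). (1/2+e) *\<^sub>R fst z + (1/2-e) *\<^sub>R snd z)"
  shows "distr \<sigma> borel g \<in> Pc Q" and "W_inf (distr \<sigma> borel g) R \<le> (1/2+e) * (\<integral>z. cst z \<partial>\<sigma>)"
proof -
  have ps: "prob_space \<sigma>" and se: "sets \<sigma> = sets (borel \<Otimes>\<^sub>M borel)" and m1: "distr \<sigma> borel fst = Q"
    using sig unfolding couplings_def by auto
  have gm: "g \<in> borel_measurable (borel \<Otimes>\<^sub>M borel)" unfolding g_def by measurable
  have gm': "g \<in> borel_measurable \<sigma>" using gm by (simp add: measurable_cong_sets[OF se refl])
  have AE1: "AE z in \<sigma>. fst z \<in> onehots" by (rule AE_coupling_fst[OF sig Q])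
  have AE2: "AE z in \<sigma>. snd z \<in> onehots" by (rule AE_coupling_snd[OF sig R])
  show "distr \<sigma> borel g \<in> Pc Q"
    unfolding Pc_def
  proof (intro CollectI conjI)
    show "distr_on prob_simplex (distr \<sigma> borel g)"
      unfolding distr_on_def
    proof (intro conjI)
      show pd: "prob_space (distr \<sigma> borel g)" by (rule prob_space.prob_space_distr[OF ps gm'])
      show "sets (distr \<sigma> borel g) = sets borel" by simp
      show sb: "prob_simplex \<in> sets (borel :: (real^'k::{finite,wellorder}) measure)" by (rule simplex_borel)
      have "AE z in \<sigma>. g z \<in> prob_simplex"
        using AE1 AE2 by eventually_elim (use e in \<open>auto simp: g_def intro: ub_simplex\<close>)
      then have "AE x in distr \<sigma> borel g. x \<in> prob_simplex"
        by (subst AE_distr_iff[OF gm']) (use sb in auto)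
      then show "emeasure (distr \<sigma> borel g) prob_simplex = 1"
        by (subst (asm) prob_space.AE_in_set_eq_1[OF pd]) (use sb in \<open>auto simp: measure_def\<close>)
    qed
    have "distr (distr \<sigma> borel g) borel onehot_of = distr \<sigma> borel (onehot_of \<circ> g)"
      by (rule distr_distr[OF onehot_meas gm'])
    also have "\<dots> = distr \<sigma> borel fst"
    proof (rule distr_cong_AE)
      show "AE z in \<sigma>. (onehot_of \<circ> g) z = fst z"
        using AE1 AE2 by eventually_elim (use e in \<open>auto simp: g_def intro: ub_onehot\<close>)
      show "onehot_of \<circ> g \<in> borel_measurable \<sigma>" by (rule measurable_comp[OF gm' onehot_meas])
      show "fst \<in> borel_measurable \<sigma>" by (rule coupling_meas_fst[OF sig])
    qed auto
    also have "\<dots> = Q" by (rule m1)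
    finally show "distr (distr \<sigma> borel g) borel onehot_of = Q" .
  qed
  note cm = coupling_map[OF sig gm]
  have "W_inf (distr \<sigma> borel g) R \<le> (\<integral>uv. cst uv \<partial>distr \<sigma> (borel \<Otimes>\<^sub>M borel) (\<lambda>z. (g z, snd z)))"
    by (rule W_nonneg_le[OF cm(1)])
  also have "\<dots> = (\<integral>z. cst (g z, snd z) \<partial>\<sigma>)"
    by (rule integral_distr[OF cm(2) cst_meas])
  also have "\<dots> = (\<integral>z. (1/2+e) * cst z \<partial>\<sigma>)"
    using e by (simp add: cst_def g_def ub_dist)
  also have "\<dots> = (1/2+e) * (\<integral>z. cst z \<partial>\<sigma>)" by simp
  finally show "W_inf (distr \<sigma> borel g) R \<le> (1/2+e) * (\<integral>z. cst z \<partial>\<sigma>)" .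
qed

theorem mainTheorem5:
  fixes Q R :: "(real ^ 'k::{finite,wellorder}) measure"
  assumes "distr_on onehots Q" and "distr_on onehots R"
  shows "Inf {W_inf P R | P. P \<in> Pc Q} = 0.5 * W_inf Q R"
proof -
  note Q = assms(1) and R = assms(2)
  define S where "S = {W_inf P R | P. P \<in> Pc Q}"
  define W where "W = W_inf Q R"
  have cne: "couplings Q R \<noteq> {}" using coupling_prod[OF Q R] by auto
  obtain \<sigma>0 where s0: "\<sigma>0 \<in> couplings Q R" using cne by auto
  have W0: "0 \<le> W" unfolding W_def by (rule W_nonneg[OF cne])
  have Sne: "S \<noteq> {}" using upper_P(1)[OF Q R s0, of "1/4"] unfolding S_def by auto
  have lb: "\<And>s. s \<in> S \<Longrightarrow> W / 2 \<le> s" using lower[OF Q R] unfolding S_def W_def by fastforce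
  have bdd: "bdd_below S" using lb by (intro bdd_belowI[of _ "W/2"]) auto
  have L: "W / 2 \<le> Inf S" using Sne lb by (intro cInf_greatest) auto
  have U: "Inf S \<le> (1/2+e) * W" if e: "0 < e" "e < 1/2" for e
  proof -
    have "Inf S / (1/2+e) \<le> W" unfolding W_def
    proof (rule W_ge[OF cne])
      fix \<sigma> assume sig: "\<sigma> \<in> couplings Q R"
      note up = upper_P[OF Q R sig e]
      have "Inf S \<le> W_inf (distr \<sigma> borel (\<lambda>z. (1/2+e) *\<^sub>R fst z + (1/2-e) *\<^sub>R snd z)) R"
        using up(1) bdd unfolding S_def by (intro cInf_lower) auto
      also have "\<dots> \<le> (1/2+e) * (\<integral>z. cst z \<partial>\<sigma>)" by (rule up(2))
      finally show "Inf S / (1/2+e) \<le> (\<integral>z. cst z \<partial>\<sigma>)"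
        using e by (simp add: divide_le_eq mult.commute)
    qed
    then show ?thesis using e by (simp add: divide_le_eq mult.commute)
  qed
  have "Inf S \<le> W / 2"
  proof (rule field_le_epsilon)
    fix d :: real assume d: "0 < d"
    define e where "e = min (1/4) (d / (W + 1))"
    have e: "0 < e" "e < 1/2" using d W0 unfolding e_def by auto
    have "e * W \<le> d"
    proof -
      have "e * W \<le> (d / (W+1)) * W" using e W0 unfolding e_def by (intro mult_right_mono) auto
      also have "\<dots> \<le> d" using d W0 by (simp add: divide_le_eq field_simps)
      finally show ?thesis .
    qed
    then show "Inf S \<le> W / 2 + d" using U[OF e] by (simp add: algebra_simps)
  qed
  with L have "Inf S = W / 2" by simp
  then show ?thesis unfolding S_def W_def by simp
qed

end
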